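(* Let $\mathbf{C}=\mathbf{C}_1\,\dot\cup\,\mathbf{C}_2$ and $\mathbf{B}\in\dot{\mathbb{P}}(\mathbb{L}(\mathbf{C}_1))$ with $|\mathbf{B}|=|\mathbf{C}_1|$. Then $\mathbf{B}$ is singular for $\mathcal{D}(\mathbf{C},\Omega)$ if and only if there exists $\omega^*\in\Omega$ such that for all values $\mathbf{c}_2^*$ of $\mathbf{C}_2$ and all values $\mathbf{b}$ of the literals of $\mathbf{B}$: $D_{\mathbf{B}=\mathbf{b},\mathbf{C}_2=\mathbf{c}_2^*}(\omega^* )=1$ if and only if $\mathbf{b}=\mathbf{1}$. (Equivalently, $D_{\mathbf{c}}(\omega^* )=(\bigwedge(\mathbf{B}))_{\mathbf{c}}$ for all $\mathbf{c}$.)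
   Context: Events are binary random variables on a population $\Omega$; $\overline{X}=1-X$; $\mathbb{L}(\mathbf{C})=\mathbf{C}\cup\{\overline{X}:X\in\mathbf{C}\}$; $\dot{\mathbb{P}}(\mathbb{L}(\mathbf{C}))$ is the set of subsets of $\mathbb{L}(\mathbf{C})$ not containing both $X$ and $\overline{X}$; $(L)_{\mathbf{c}}$ is the value of literal $L$ under assignment $\mathbf{c}$; $\bigwedge(\mathbf{B})=\min_{L\in\mathbf{B}}L$. Potential outcomes $\mathcal{D}(\mathbf{C},\Omega)$: $D_{\mathbf{c}}(\omega)\in\{0,1\}$. Since $|\mathbf{B}|=|\mathbf{C}_1|$, values $\mathbf{b}$ for the literals of $\mathbf{B}$ determine an assignment to $\mathbf{C}_1$. $\mathbf{B}\subseteq\mathbb{L}(\mathbf{C})$ is a sufficient cause for $D$ relative to $\mathbf{C}$ for $\omega^*$ if some $\mathbf{c}^*$ has $(\bigwedge(\mathbf{B}))_{\mathbf{c}^*}=1$ and $D_{\mathbf{c}}(\omega^* )=1$ for every $\mathbf{c}$ with $(\bigwedge(\mathbf{B}))_{\mathbf{c}}=1$; it is minimal if no proper subset is a sufficient cause for $\omega^*$. A minimal sufficient cause $\mathbf{B}$ for $\omega^*$ is singular (relative to $\mathbf{C}$, for $\omega^*$) if there is no $\mathbf{B}'\in\dot{\mathbb{P}}(\mathbb{L}(\mathbf{C}))$, $\mathbf{B}'\neq\mathbf{B}$, that is also a minimal sufficient cause for $D$ relative to $\mathbf{C}$ for $\omega^*$. $\mathbf{B}$ is singular for $\mathcal{D}(\mathbf{C},\Omega)$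 if it is singular for some $\omega^*\in\Omega$. *)

theory Defs
  imports Main
begin

(* A literal is a pair (X, p): (X, True) is X,
   (X, False) is the complement of X.  Potential outcomes are
   D :: 'w => ('v => bool) => bool, D w c being D_c(w). *)

definition assignments :: "'v set \<Rightarrow> ('v \<Rightarrow> bool) set" where
  "assignments C = {c. \<forall>x. x \<notin> C \<longrightarrow> c x = False}"

definition lits :: "'v set \<Rightarrow> ('v \<times> bool) set" where
  "lits C = C \<times> (UNIV :: bool set)"

definition compl_lit :: "'v \<times> bool \<Rightarrow> 'v \<times> bool" where
  "compl_lit L = (fst L, \<not> snd L)"

definition consistent_lits :: "'v set \<Rightarrow> ('v \<times> bool) set set" where
  "consistent_lits C = {B. B \<subseteq> lits C \<and> (\<forall>L\<in>B. compl_lit L \<notin> B)}"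

definition lit_val :: "('v \<Rightarrow> bool) \<Rightarrow> 'v \<times> bool \<Rightarrow> bool" where
  "lit_val c L = (c (fst L) = snd L)"

definition conj_val :: "('v \<times> bool) set \<Rightarrow> ('v \<Rightarrow> bool) \<Rightarrow> bool" where
  "conj_val B c = (\<forall>L\<in>B. lit_val c L)"

definition sufficient_cause ::
  "'v set \<Rightarrow> ('w \<Rightarrow> ('v \<Rightarrow> bool) \<Rightarrow> bool) \<Rightarrow> ('v \<times> bool) set \<Rightarrow> 'w \<Rightarrow> bool" where
  "sufficient_cause C D B w \<longleftrightarrow>
     B \<subseteq> lits C \<and>
     (\<exists>c\<in>assignments C. conj_val B c) \<and>
     (\<forall>c\<in>assignments C. conj_val B c \<longrightarrow> D w c)"

definition minimal_sufficient_cause ::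
  "'v set \<Rightarrow> ('w \<Rightarrow> ('v \<Rightarrow> bool) \<Rightarrow> bool) \<Rightarrow> ('v \<times> bool) set \<Rightarrow> 'w \<Rightarrow> bool" where
  "minimal_sufficient_cause C D B w \<longleftrightarrow>
     sufficient_cause C D B w \<and> (\<forall>B'. B' \<subset> B \<longrightarrow> \<not> sufficient_cause C D B' w)"

definition singular_at ::
  "'v set \<Rightarrow> ('w \<Rightarrow> ('v \<Rightarrow> bool) \<Rightarrow> bool) \<Rightarrow> ('v \<times> bool) set \<Rightarrow> 'w \<Rightarrow> bool" where
  "singular_at C D B w \<longleftrightarrow>
     minimal_sufficient_cause C D B w \<and>
     (\<forall>B'\<in>consistent_lits C. B' \<noteq> B \<longrightarrow> \<not> minimal_sufficient_cause C D B' w)"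

definition singular ::
  "'v set \<Rightarrow> 'w set \<Rightarrow> ('w \<Rightarrow> ('v \<Rightarrow> bool) \<Rightarrow> bool) \<Rightarrow> ('v \<times> bool) set \<Rightarrow> bool" where
  "singular C \<Omega> D B \<longleftrightarrow> (\<exists>w\<in>\<Omega>. singular_at C D B w)"

(* The assignment to C1 \<union> C2 given by values b of the literals of B (one literal per
   variable of C1) and an assignment c2 to C2: a variable X \<in> C1 with literal (X,p) \<in> B
   gets the value making that literal equal to b (X,p). *)
definition joint_assignment ::
  "'v set \<Rightarrow> ('v \<times> bool) set \<Rightarrow> ('v \<times> bool \<Rightarrow> bool) \<Rightarrow> ('v \<Rightarrow> bool) \<Rightarrow> ('v \<Rightarrow> bool)" where
  "joint_assignment C1 B b c2 =
     (\<lambda>X. if X \<in> C1 then (\<exists>p. (X, p) \<in> B \<and> b (X, p) = p) else c2 X)"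

end

theory Submission
  imports Defs
begin

lemma uniq_lit:
  assumes "B \<in> consistent_lits C1" "(X,p) \<in> B" "(X,q) \<in> B"
  shows "p = q"
proof (rule ccontr)
  assume "p \<noteq> q"
  then have "compl_lit (X,p) = (X,q)" by (auto simp: compl_lit_def)
  with assms show False by (auto simp: consistent_lits_def)
qed

lemma lit_in:
  assumes "B \<in> consistent_lits C1" "(X,p) \<in> B"
  shows "X \<in> C1"
  using assms by (auto simp: consistent_lits_def lits_def)

lemma exists_lit:
  assumes "finite C1" "B \<in> consistent_lits C1" "card B = card C1" "X \<in> C1"
  shows "\<exists>p. (X,p) \<in> B"
proof -
  have sub: "B \<subseteq> C1 \<times> UNIV" using assms(2) by (auto simp: consistent_lits_def lits_def)
  have finB: "finite B" using finite_subset[OF sub] assms(1) by simp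
  have inj: "inj_on fst B"
  proof (rule inj_onI)
    fix x y assume "x \<in> B" "y \<in> B" "fst x = fst y"
    then have "(fst x, snd x) \<in> B" "(fst x, snd y) \<in> B" by (metis prod.collapse)+
    then have "snd x = snd y" by (rule uniq_lit[OF assms(2)])
    with \<open>fst x = fst y\<close> show "x = y" by (simp add: prod_eq_iff)
  qed
  have "card (fst ` B) = card C1" using card_image[OF inj] assms(3) by simp
  moreover have "fst ` B \<subseteq> C1" using sub by auto
  ultimately have "fst ` B = C1" using card_subset_eq assms(1) by blast
  with assms(4) show ?thesis by force
qed

lemma joint_assign:
  assumes "C1 \<inter> C2 = {}" "c2 \<in> assignments C2"
  shows "joint_assignment C1 B b c2 \<in> assignments (C1 \<union> C2)"
  using assms by (auto simp: assignments_def joint_assignment_def)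

lemma joint_conj:
  assumes "B \<in> consistent_lits C1"
  shows "conj_val B (joint_assignment C1 B b c2) \<longleftrightarrow> (\<forall>L\<in>B. b L)"
proof -
  have "lit_val (joint_assignment C1 B b c2) (X,p) = b (X,p)" if "(X,p) \<in> B" for X p
  proof -
    have "X \<in> C1" using lit_in[OF assms that] .
    moreover have "(\<exists>q. (X, q) \<in> B \<and> b (X, q) = q) = (b (X,p) = p)"
      using uniq_lit[OF assms that] that by blast
    ultimately show ?thesis by (auto simp: lit_val_def joint_assignment_def)
  qed
  then show ?thesis by (auto simp: conj_val_def)
qed

lemma joint_surj:
  assumes "finite C1" "B \<in> consistent_lits C1" "card B = card C1"
    "c \<in> assignments (C1 \<union> C2)"
  shows "c = joint_assignment C1 B (lit_val c) (\<lambda>X. if X \<in> C2 then c X else False)"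
    and "(\<lambda>X. if X \<in> C2 then c X else False) \<in> assignments C2"
proof -
  show "(\<lambda>X. if X \<in> C2 then c X else False) \<in> assignments C2" by (simp add: assignments_def)
  show "c = joint_assignment C1 B (lit_val c) (\<lambda>X. if X \<in> C2 then c X else False)"
  proof
    fix X
    show "c X = joint_assignment C1 B (lit_val c) (\<lambda>X. if X \<in> C2 then c X else False) X"
    proof (cases "X \<in> C1")
      case True
      then obtain p where p: "(X,p) \<in> B" using exists_lit[OF assms(1,2,3) True] by blast
      have "(\<exists>q. (X, q) \<in> B \<and> lit_val c (X, q) = q) = (lit_val c (X,p) = p)"
        using uniq_lit[OF assms(2) p] p by blast
      then have "joint_assignment C1 B (lit_val c) (\<lambda>X. if X \<in> C2 then c X else False) X
          = ((c X = p) = p)" using True by (simp add: joint_assignment_def lit_val_def)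
      then show ?thesis by (cases p) auto
    next
      case False
      then show ?thesis using assms(4) unfolding assignments_def joint_assignment_def by simp
    qed
  qed
qed

lemma rhs_equiv:
  assumes "finite C1" "C1 \<inter> C2 = {}" "B \<in> consistent_lits C1" "card B = card C1"
  shows "(\<forall>c2\<in>assignments C2. \<forall>b :: 'v \<times> bool \<Rightarrow> bool.
        D w (joint_assignment C1 B b c2) \<longleftrightarrow> (\<forall>L\<in>B. b L))
     \<longleftrightarrow> (\<forall>c\<in>assignments (C1 \<union> C2). D w c \<longleftrightarrow> conj_val B c)"
proof
  assume H: "\<forall>c2\<in>assignments C2. \<forall>b :: 'v \<times> bool \<Rightarrow> bool.
        D w (joint_assignment C1 B b c2) \<longleftrightarrow> (\<forall>L\<in>B. b L)"
  show "\<forall>c\<in>assignments (C1 \<union> C2). D w c \<longleftrightarrow> conj_val B c"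
  proof
    fix c assume c: "c \<in> assignments (C1 \<union> C2)"
    note J = joint_surj[OF assms(1,3,4) c]
    have "D w (joint_assignment C1 B (lit_val c) (\<lambda>X. if X \<in> C2 then c X else False))
       \<longleftrightarrow> (\<forall>L\<in>B. lit_val c L)" using H J(2) by blast
    then have "D w c \<longleftrightarrow> (\<forall>L\<in>B. lit_val c L)" unfolding J(1)[symmetric] .
    then show "D w c \<longleftrightarrow> conj_val B c" by (simp add: conj_val_def)
  qed
next
  assume H: "\<forall>c\<in>assignments (C1 \<union> C2). D w c \<longleftrightarrow> conj_val B c"
  show "\<forall>c2\<in>assignments C2. \<forall>b :: 'v \<times> bool \<Rightarrow> bool.
        D w (joint_assignment C1 B b c2) \<longleftrightarrow> (\<forall>L\<in>B. b L)"
  proof (intro ballI allI)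
    fix c2 b assume "c2 \<in> assignments C2"
    then have "joint_assignment C1 B b c2 \<in> assignments (C1 \<union> C2)" by (rule joint_assign[OF assms(2)])
    then show "D w (joint_assignment C1 B b c2) \<longleftrightarrow> (\<forall>L\<in>B. b L)"
      using H joint_conj[OF assms(3)] by simp
  qed
qed

lemma exact_sub:
  assumes "B \<in> consistent_lits C1" "C1 \<subseteq> C"
    and ex: "\<forall>c\<in>assignments C. D w c \<longleftrightarrow> conj_val B c"
    and suf: "sufficient_cause C D B' w"
  shows "B \<subseteq> B'"
proof
  fix L assume L: "L \<in> B"
  obtain X p where Lp: "L = (X,p)" by (cases L)
  have XC: "X \<in> C" using lit_in[OF assms(1)] L Lp assms(2) by blast
  show "L \<in> B'"
  proof (rule ccontr)
    assume nL: "L \<notin> B'"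
    obtain c where c: "c \<in> assignments C" "conj_val B' c" using suf by (auto simp: sufficient_cause_def)
    have "D w c" using suf c by (auto simp: sufficient_cause_def)
    then have "conj_val B c" using ex c by blast
    then have cX: "c X = p" using L Lp by (auto simp: conj_val_def lit_val_def)
    define c' where "c' = c(X := \<not> p)"
    have c'a: "c' \<in> assignments C" using c(1) XC by (auto simp: c'_def assignments_def)
    have "conj_val B' c'"
      unfolding conj_val_def
    proof
      fix M assume M: "M \<in> B'"
      obtain Y q where Mq: "M = (Y,q)" by (cases M)
      show "lit_val c' M"
      proof (cases "Y = X")
        case True
        then have "q \<noteq> p" using M Mq nL Lp by (cases q; cases p) auto
        then have qp: "q = (\<not> p)" by auto
        have "c' X = (\<not> p)" by (simp add: c'_def)
        then show ?thesis using True Mq qp by (simp add: lit_val_def)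
      next
        case False
        then show ?thesis using c(2) M Mq by (auto simp: conj_val_def lit_val_def c'_def)
      qed
    qed
    then have "D w c'" using suf c'a by (auto simp: sufficient_cause_def)
    then have "conj_val B c'" using ex c'a by blast
    then have "c' X = p" using L Lp by (auto simp: conj_val_def lit_val_def)
    then show False by (simp add: c'_def)
  qed
qed

lemma singular_iff_exact:
  assumes "finite C1" "finite C2" "C1 \<inter> C2 = {}" "B \<in> consistent_lits C1" "card B = card C1"
  shows "singular_at (C1 \<union> C2) D B w \<longleftrightarrow> (\<forall>c\<in>assignments (C1 \<union> C2). D w c \<longleftrightarrow> conj_val B c)"
proof
  let ?C = "C1 \<union> C2"
  assume S: "singular_at ?C D B w"
  then have suf: "sufficient_cause ?C D B w"
    by (auto simp: singular_at_def minimal_sufficient_cause_def)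
  show "\<forall>c\<in>assignments ?C. D w c \<longleftrightarrow> conj_val B c"
  proof
    fix c assume c: "c \<in> assignments ?C"
    show "D w c \<longleftrightarrow> conj_val B c"
    proof
      assume "conj_val B c" then show "D w c" using suf c by (auto simp: sufficient_cause_def)
    next
      assume Dc: "D w c"
      show "conj_val B c"
      proof (rule ccontr)
        assume nB: "\<not> conj_val B c"
        define F where "F = (\<lambda>X. (X, c X)) ` ?C"
        have finF: "finite F" using assms(1,2) by (simp add: F_def)
        have Fl: "F \<subseteq> lits ?C" by (auto simp: F_def lits_def)
        have cF: "conj_val F c" by (auto simp: F_def conj_val_def lit_val_def)
        have onlyc: "c' = c" if "c' \<in> assignments ?C" "conj_val F c'" for c'
        proof
          fix X show "c' X = c X"
          proof (cases "X \<in> ?C")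
            case True
            then have "(X, c X) \<in> F" by (simp add: F_def)
            then have "lit_val c' (X, c X)" using that(2) unfolding conj_val_def by blast
            then show ?thesis by (simp add: lit_val_def)
          next
            case False
            then show ?thesis using that(1) c unfolding assignments_def by blast
          qed
        qed
        have sufF: "sufficient_cause ?C D F w"
          unfolding sufficient_cause_def
        proof (intro conjI)
          show "\<exists>c\<in>assignments ?C. conj_val F c" using c cF by blast
          show "\<forall>c'\<in>assignments ?C. conj_val F c' \<longrightarrow> D w c'"
          proof (intro ballI impI)
            fix c' assume "c' \<in> assignments ?C" "conj_val F c'"
            then have "c' = c" by (rule onlyc)
            then show "D w c'" using Dc by simp
          qed
        qed (rule Fl)
        let ?S = "{B'. B' \<subseteq> F \<and> sufficient_cause ?C D B' w}"
        have finS: "finite ?S" 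
        proof (rule finite_subset)
          show "?S \<subseteq> Pow F" by blast
          show "finite (Pow F)" using finF by simp
        qed
        obtain M where M: "M \<in> ?S" "\<forall>b\<in>?S. b \<le> M \<longrightarrow> M = b"
        proof -
          have "?S \<noteq> {}" using sufF by blast
          from finite_has_minimal[OF finS this] show ?thesis using that by blast
        qed
        have minM: "minimal_sufficient_cause ?C D M w"
          unfolding minimal_sufficient_cause_def
        proof (intro conjI allI impI)
          show "sufficient_cause ?C D M w" using M by auto
        next
          fix B' assume "B' \<subset> M"
          show "\<not> sufficient_cause ?C D B' w"
          proof
            assume "sufficient_cause ?C D B' w"
            moreover have "B' \<subseteq> F" using \<open>B' \<subset> M\<close> M(1) by blast
            ultimately have "B' \<in> ?S" by blast
            then have "M = B'" using M(2) \<open>B' \<subset> M\<close> by blast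
            then show False using \<open>B' \<subset> M\<close> by simp
          qed
        qed
        have "\<forall>L\<in>M. compl_lit L \<notin> M"
        proof
          fix L assume "L \<in> M"
          then obtain X where LX: "L = (X, c X)" using M(1) by (auto simp: F_def)
          have "(X, \<not> c X) \<notin> F" by (auto simp: F_def)
          then show "compl_lit L \<notin> M" using M(1) LX by (auto simp: compl_lit_def)
        qed
        then have consM: "M \<in> consistent_lits ?C"
          using M(1) Fl by (auto simp: consistent_lits_def)
        have "conj_val M c" using M(1) cF by (auto simp: conj_val_def)
        then have "M \<noteq> B" using nB by auto
        moreover have "\<forall>B'\<in>consistent_lits ?C. B' \<noteq> B \<longrightarrow> \<not> minimal_sufficient_cause ?C D B' w"
          using S by (simp add: singular_at_def)
        ultimately show False using consM minM by blast
      qed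
    qed
  qed
next
  let ?C = "C1 \<union> C2"
  assume ex: "\<forall>c\<in>assignments ?C. D w c \<longleftrightarrow> conj_val B c"
  have sub: "C1 \<subseteq> ?C" by auto
  have Bl: "B \<subseteq> lits ?C" using assms(4) by (auto simp: consistent_lits_def lits_def)
  have "joint_assignment C1 B (\<lambda>_. True) (\<lambda>_. False) \<in> assignments ?C"
    by (rule joint_assign[OF assms(3)]) (simp add: assignments_def)
  moreover have "conj_val B (joint_assignment C1 B (\<lambda>_. True) (\<lambda>_. False))"
    using joint_conj[OF assms(4)] by simp
  ultimately have suf: "sufficient_cause ?C D B w"
    unfolding sufficient_cause_def using Bl ex by blast
  have min: "minimal_sufficient_cause ?C D B w"
    unfolding minimal_sufficient_cause_def
  proof (intro conjI allI impI)
    show "sufficient_cause ?C D B w" by (rule suf)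
  next
    fix B' assume "B' \<subset> B"
    show "\<not> sufficient_cause ?C D B' w"
    proof
      assume "sufficient_cause ?C D B' w"
      then have "B \<subseteq> B'" by (rule exact_sub[where D=D and w=w, OF assms(4) sub ex])
      then show False using \<open>B' \<subset> B\<close> by blast
    qed
  qed
  show "singular_at ?C D B w"
    unfolding singular_at_def
  proof (intro conjI ballI impI)
    show "minimal_sufficient_cause ?C D B w" by (rule min)
  next
    fix B' assume "B' \<in> consistent_lits ?C" "B' \<noteq> B"
    show "\<not> minimal_sufficient_cause ?C D B' w"
    proof
      assume m: "minimal_sufficient_cause ?C D B' w"
      then have "sufficient_cause ?C D B' w" by (simp add: minimal_sufficient_cause_def)
      then have "B \<subseteq> B'" by (rule exact_sub[where D=D and w=w, OF assms(4) sub ex])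
      with \<open>B' \<noteq> B\<close> have "B \<subset> B'" by auto
      moreover have "\<forall>B''. B'' \<subset> B' \<longrightarrow> \<not> sufficient_cause ?C D B'' w"
        using m by (simp add: minimal_sufficient_cause_def)
      ultimately show False using suf by blast
    qed
  qed
qed

theorem mainTheorem12:
  fixes C1 C2 :: "'v set" and \<Omega> :: "'w set"
    and D :: "'w \<Rightarrow> ('v \<Rightarrow> bool) \<Rightarrow> bool" and B :: "('v \<times> bool) set"
  assumes "finite C1" and "finite C2" and "C1 \<inter> C2 = {}"
    and "B \<in> consistent_lits C1" and "card B = card C1"
  shows "singular (C1 \<union> C2) \<Omega> D B \<longleftrightarrow>
    (\<exists>w\<in>\<Omega>. \<forall>c2\<in>assignments C2. \<forall>b :: 'v \<times> bool \<Rightarrow> bool.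
        D w (joint_assignment C1 B b c2) \<longleftrightarrow> (\<forall>L\<in>B. b L))"
  unfolding singular_def
proof (rule bex_cong[OF refl])
  fix w assume "w \<in> \<Omega>"
  show "singular_at (C1 \<union> C2) D B w \<longleftrightarrow> (\<forall>c2\<in>assignments C2. \<forall>b :: 'v \<times> bool \<Rightarrow> bool.
        D w (joint_assignment C1 B b c2) \<longleftrightarrow> (\<forall>L\<in>B. b L))"
    using singular_iff_exact[OF assms, of D w] rhs_equiv[OF assms(1,3,4,5), of D w] by simp
qed

end
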